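(* If $\mu>-2$ and $|\nu|<|\mu+1|$, then $x\mapsto I_{\mu+1}(x)/\tilde{t}_{\mu,\nu}(x)$ is strictly increasing on $(0,\infty)$. If $\mu>-2$ and $|\mu+1|<|\nu|<\mu+3$, then $x\mapsto I_{\mu+1}(x)/\tilde{t}_{\mu,\nu}(x)$ is strictly decreasing on $(0,\infty)$.
   Context: For real $\mu,\nu$ the (normalized) modified Lommel function of the first kind is $$\tilde{t}_{\mu,\nu}(x)=\sum_{k=0}^\infty\frac{(\frac{1}{2}x)^{\mu+2k+1}}{\Gamma\big(k+\frac{\mu-\nu+3}{2}\big)\Gamma\big(k+\frac{\mu+\nu+3}{2}\big)},\quad x>0,$$ and $I_\alpha(x)=\sum_{k=0}^\infty\frac{(\frac{1}{2}x)^{2k+\alpha}}{k!\,\Gamma(k+\alpha+1)}$ is the modified Bessel function of the first kind. *)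

theory Defs
  imports "HOL-Analysis.Analysis"
begin

definition besselI :: "real \<Rightarrow> real \<Rightarrow> real" where
  "besselI \<alpha> x = (\<Sum>k. (x / 2) powr (2 * real k + \<alpha>) / (fact k * Gamma (real k + \<alpha> + 1)))"

text \<open>Normalized modified Lommel function of the first kind, for x > 0.
  Reciprocal Gamma is used (rGamma), so terms at poles of Gamma vanish.\<close>
definition lommel_t :: "real \<Rightarrow> real \<Rightarrow> real \<Rightarrow> real" where
  "lommel_t \<mu> \<nu> x = (\<Sum>k. (x / 2) powr (\<mu> + 2 * real k + 1)
      * rGamma (real k + (\<mu> - \<nu> + 3) / 2) * rGamma (real k + (\<mu> + \<nu> + 3) / 2))"

end

theory Submission
  imports Defs "HOL-Real_Asymp.Real_Asymp"
begin

lemma ratio_summable: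
  fixes f :: "nat \<Rightarrow> real"
  assumes pos: "\<And>n. f n > 0" and lim: "(\<lambda>n. f (Suc n) / f n) \<longlonglongrightarrow> 0"
  shows "summable f"
proof -
  have "eventually (\<lambda>n. f (Suc n) / f n < 1/2) sequentially"
    using order_tendstoD(2)[OF lim, of "1/2"] by simp
  then obtain N where N: "\<And>n. n \<ge> N \<Longrightarrow> f (Suc n) / f n < 1/2"
    unfolding eventually_sequentially by blast
  show ?thesis
  proof (rule summable_ratio_test[of "1/2" N])
    fix n assume "n \<ge> N"
    from N[OF this] pos[of n] pos[of "Suc n"]
    show "norm (f (Suc n)) \<le> 1/2 * norm (f n)" by (simp add: field_simps)
  qed simp
qed

lemma pow_cross:
  fixes s t :: real
  assumes "0 < s" "s \<le> t" "i \<le> N"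
  shows "t^i * s^N \<le> t^N * s^i"
proof -
  have N: "N = i + (N - i)" using assms by simp
  have "s^(N-i) \<le> t^(N-i)" using assms by (intro power_mono) auto
  hence "(t^i * s^i) * s^(N-i) \<le> (t^i * s^i) * t^(N-i)"
    using assms by (intro mult_left_mono) auto
  thus ?thesis by (subst (1 2) N, simp only: power_add) (simp add: algebra_simps)
qed

lemma ratio_mono:
  fixes c d :: "nat \<Rightarrow> real"
  assumes cpos: "\<And>k. c k > 0" and dpos: "\<And>k. d k > 0"
  and sm: "\<And>i j. i < j \<Longrightarrow> c i * d j < c j * d i"
  and sct: "summable (\<lambda>k. c k * t^k)" and sdt: "summable (\<lambda>k. d k * t^k)"
  and scs: "summable (\<lambda>k. c k * s^k)" and sds: "summable (\<lambda>k. d k * s^k)"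
  and st: "0 < s" "s < t"
  shows "(\<Sum>k. c k * s^k) * (\<Sum>k. d k * t^k) < (\<Sum>k. c k * t^k) * (\<Sum>k. d k * s^k)"
proof -
  define D where "D N = (\<Sum>k<N. c k * t^k) * (\<Sum>k<N. d k * s^k)
      - (\<Sum>k<N. c k * s^k) * (\<Sum>k<N. d k * t^k)" for N
  have step: "D (Suc N) = D N + (\<Sum>i<N. (c N * d i - c i * d N) * (t^N * s^i - t^i * s^N))" for N
  proof -
    have e: "(\<Sum>i<N. (c N * d i - c i * d N) * (t^N * s^i - t^i * s^N))
      = c N * t^N * (\<Sum>k<N. d k * s^k) - c N * s^N * (\<Sum>k<N. d k * t^k)
        - d N * t^N * (\<Sum>k<N. c k * s^k) + d N * s^N * (\<Sum>k<N. c k * t^k)"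
      by (simp add: sum_distrib_left sum_subtractf[symmetric] sum.distrib[symmetric] algebra_simps)
    show ?thesis unfolding D_def e by (simp add: algebra_simps)
  qed
  have mono: "D N \<le> D (Suc N)" for N
  proof -
    have "0 \<le> (\<Sum>i<N. (c N * d i - c i * d N) * (t^N * s^i - t^i * s^N))"
    proof (rule sum_nonneg)
      fix i assume "i \<in> {..<N}"
      hence "i < N" by simp
      have "0 \<le> c N * d i - c i * d N" using sm[OF \<open>i<N\<close>] by simp
      moreover have "0 \<le> t^N * s^i - t^i * s^N" using pow_cross[of s t i N] st \<open>i<N\<close> by simp
      ultimately show "0 \<le> (c N * d i - c i * d N) * (t^N * s^i - t^i * s^N)" by simp
    qed
    thus ?thesis using step[of N] by simp
  qed
  have D2: "D 2 = (c 1 * d 0 - c 0 * d 1) * (t - s)"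
    using step[of 1] step[of 0] by (simp add: D_def numeral_2_eq_2)
  have D2pos: "D 2 > 0" unfolding D2 using sm[of 0 1] st by simp
  have inc: "incseq D" using mono by (simp add: incseq_SucI)
  have lim: "D \<longlonglongrightarrow> (\<Sum>k. c k * t^k) * (\<Sum>k. d k * s^k) - (\<Sum>k. c k * s^k) * (\<Sum>k. d k * t^k)"
    unfolding D_def
    by (intro tendsto_intros summable_LIMSEQ sct sdt scs sds)
  have "D 2 \<le> (\<Sum>k. c k * t^k) * (\<Sum>k. d k * s^k) - (\<Sum>k. c k * s^k) * (\<Sum>k. d k * t^k)"
    by (rule LIMSEQ_le_const[OF lim]) (use inc in \<open>auto simp: incseq_def\<close>)
  thus ?thesis using D2pos by simp
qed


lemma rGamma_pos: "z > (0::real) \<Longrightarrow> rGamma z > 0"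
  by (simp add: rGamma_inverse_Gamma)

lemma pow_split:
  fixes x :: real assumes "x > 0"
  shows "x powr (e + 2 * real k) = x powr e * (x^2)^k"
proof -
  have "x powr (2 * real k) = x powr real (2*k)" by simp
  also have "\<dots> = x^(2*k)" by (rule powr_realpow[OF assms])
  finally show ?thesis by (simp add: powr_add power_mult)
qed

lemma ratio_mono2:
  fixes c d :: "nat \<Rightarrow> real"
  assumes cpos: "\<And>k. c k > 0" and dpos: "\<And>k. d k > 0"
  and sm: "\<And>k. c k / d k < c (Suc k) / d (Suc k)"
  and sc: "\<And>y. y > 0 \<Longrightarrow> summable (\<lambda>k. c k * y^k)"
  and sd: "\<And>y. y > 0 \<Longrightarrow> summable (\<lambda>k. d k * y^k)"
  and st: "0 < s" "s < t"
  shows "(\<Sum>k. c k * s^k) / (\<Sum>k. d k * s^k) < (\<Sum>k. c k * t^k) / (\<Sum>k. d k * t^k)"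
proof -
  have smo: "strict_mono (\<lambda>k. c k / d k)" using sm by (simp add: strict_mono_Suc_iff)
  have gpos: "(\<Sum>k. d k * y^k) > 0" if "y > 0" for y
    using sd[OF that] that dpos by (intro suminf_pos) auto
  have "(\<Sum>k. c k * s^k) * (\<Sum>k. d k * t^k) < (\<Sum>k. c k * t^k) * (\<Sum>k. d k * s^k)"
  proof (rule ratio_mono[OF cpos dpos _ sc sd sc sd st])
    fix i j :: nat assume "i < j"
    hence "c i / d i < c j / d j" using strict_monoD[OF smo] by blast
    thus "c i * d j < c j * d i" using dpos[of i] dpos[of j] by (simp add: field_simps)
  qed (use st in auto)
  thus ?thesis using gpos[of s] gpos[of t] st by (simp add: field_simps)
qed

lemma flip_frac:
  fixes A B A' B' :: real
  assumes "0 < A" "0 < B" "0 < A'" "0 < B'" "B / A < B' / A'"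
  shows "A' / B' < A / B"
proof -
  have "B * A' < B' * A" using assms(5) assms(1,3) by (simp add: divide_simps)
  thus ?thesis using assms(2,4) by (simp add: divide_simps mult_ac)
qed

lemma key:
  fixes \<mu> \<nu> x x' :: real
  assumes mu: "\<mu> > -2" and apos: "(\<mu> - \<nu> + 3)/2 > 0" and bpos: "(\<mu> + \<nu> + 3)/2 > 0"
    and x: "0 < x" "x < x'"
  shows "(\<nu>^2 < (\<mu>+1)^2 \<longrightarrow> besselI (\<mu> + 1) x / lommel_t \<mu> \<nu> x < besselI (\<mu> + 1) x' / lommel_t \<mu> \<nu> x')
       \<and> ((\<mu>+1)^2 < \<nu>^2 \<longrightarrow> besselI (\<mu> + 1) x / lommel_t \<mu> \<nu> x > besselI (\<mu> + 1) x' / lommel_t \<mu> \<nu> x')"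
proof -
  define a where "a = (\<mu> - \<nu> + 3)/2"
  define b where "b = (\<mu> + \<nu> + 3)/2"
  define c where "c k = rGamma (real k + (\<mu> + 1) + 1) / fact k" for k
  define d where "d k = rGamma (real k + a) * rGamma (real k + b)" for k
  have a: "a > 0" and b: "b > 0" using apos bpos by (auto simp: a_def b_def)
  have cpos: "c k > 0" for k using mu unfolding c_def by (intro divide_pos_pos rGamma_pos) auto
  have dpos: "d k > 0" for k using a b unfolding d_def by (intro mult_pos_pos rGamma_pos) auto
  have cS: "c (Suc k) = c k / ((real k + 1) * (real k + \<mu> + 2))" for k
  proof -
    have r: "(real k + \<mu> + 2) * rGamma ((real k + \<mu> + 2) + 1) = rGamma (real k + \<mu> + 2)"
      by (rule rGamma_plus1)
    have p: "real k + \<mu> + 2 > 0" using mu by simp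
    have e0: "real (Suc k) + (\<mu> + 1) + 1 = (real k + \<mu> + 2) + 1" "real k + (\<mu> + 1) + 1 = real k + \<mu> + 2" by simp_all
    have e: "rGamma (real (Suc k) + (\<mu> + 1) + 1) = rGamma (real k + (\<mu> + 1) + 1) / (real k + \<mu> + 2)"
      unfolding e0 using r p by (simp add: eq_divide_eq mult.commute)
    show ?thesis unfolding c_def e using p by (simp add: field_simps)
  qed
  have dS: "d (Suc k) = d k / ((real k + a) * (real k + b))" for k
  proof -
    have ra: "rGamma (real (Suc k) + a) = rGamma (real k + a) / (real k + a)"
      using rGamma_plus1[of "real k + a"] a by (simp add: eq_divide_eq mult.commute add_ac)
    have rb: "rGamma (real (Suc k) + b) = rGamma (real k + b) / (real k + b)"
      using rGamma_plus1[of "real k + b"] b by (simp add: eq_divide_eq mult.commute add_ac)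
    show ?thesis unfolding d_def ra rb by simp
  qed
  have sc: "summable (\<lambda>k. c k * y^k)" if "y > 0" for y
  proof (rule ratio_summable)
    show "c n * y^n > 0" for n using cpos that by simp
    have "(\<lambda>n. c (Suc n) * y^(Suc n) / (c n * y^n)) = (\<lambda>n. y / ((real n + 1) * (real n + \<mu> + 2)))"
    proof (rule ext)
      fix n
      have "(real n + 1) * (real n + \<mu> + 2) > 0" using mu by (intro mult_pos_pos) auto
      thus "c (Suc n) * y^(Suc n) / (c n * y^n) = y / ((real n + 1) * (real n + \<mu> + 2))"
      proof -
        have "c (Suc n) * y^(Suc n) = (c n * y^n) * (y / ((real n + 1) * (real n + \<mu> + 2)))"
          by (simp add: cS)
        thus ?thesis using cpos[of n] that by simp
      qed
    qed
    moreover have "(\<lambda>n. y / ((real n + 1) * (real n + \<mu> + 2))) \<longlonglongrightarrow> 0" by real_asymp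
    ultimately show "(\<lambda>n. c (Suc n) * y^(Suc n) / (c n * y^n)) \<longlonglongrightarrow> 0" by simp
  qed
  have sd: "summable (\<lambda>k. d k * y^k)" if "y > 0" for y
  proof (rule ratio_summable)
    show "d n * y^n > 0" for n using dpos that by simp
    have "(\<lambda>n. d (Suc n) * y^(Suc n) / (d n * y^n)) = (\<lambda>n. y / ((real n + a) * (real n + b)))"
    proof (rule ext)
      fix n
      have "(real n + a) * (real n + b) > 0" using a b by (intro mult_pos_pos) auto
      thus "d (Suc n) * y^(Suc n) / (d n * y^n) = y / ((real n + a) * (real n + b))"
      proof -
        have "d (Suc n) * y^(Suc n) = (d n * y^n) * (y / ((real n + a) * (real n + b)))"
          by (simp add: dS)
        thus ?thesis using dpos[of n] that by simp
      qed
    qed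
    moreover have "(\<lambda>n. y / ((real n + a) * (real n + b))) \<longlonglongrightarrow> 0" by real_asymp
    ultimately show "(\<lambda>n. d (Suc n) * y^(Suc n) / (d n * y^n)) \<longlonglongrightarrow> 0" by simp
  qed
  have F: "besselI (\<mu> + 1) z / lommel_t \<mu> \<nu> z = (\<Sum>k. c k * ((z/2)^2)^k) / (\<Sum>k. d k * ((z/2)^2)^k)"
    if z: "z > 0" for z
  proof -
    define P where "P = (z/2) powr (\<mu>+1)"
    have P: "P > 0" using z by (simp add: P_def)
    have y: "(z/2)^2 > 0" using z by simp
    have "besselI (\<mu> + 1) z = (\<Sum>k. P * (c k * ((z/2)^2)^k))"
      unfolding besselI_def
    proof (rule suminf_cong)
      fix k
      have "(z/2) powr (2 * real k + (\<mu> + 1)) = P * ((z/2)^2)^k"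
        using pow_split[of "z/2" "\<mu>+1" k] z by (simp add: P_def add.commute)
      then show "(z / 2) powr (2 * real k + (\<mu> + 1)) / (fact k * Gamma (real k + (\<mu> + 1) + 1)) = P * (c k * ((z/2)^2)^k)"
      proof -
        have G: "X / (fact k * Gamma g) = X * (rGamma g / fact k)" for X g :: real
          by (simp add: rGamma_inverse_Gamma divide_inverse mult_ac)
        show ?thesis unfolding G \<open>(z/2) powr (2 * real k + (\<mu> + 1)) = P * ((z/2)^2)^k\<close> c_def
          by (simp add: mult_ac)
      qed
    qed
    also have "\<dots> = P * (\<Sum>k. c k * ((z/2)^2)^k)" by (rule suminf_mult[OF sc[OF y]])
    finally have I: "besselI (\<mu> + 1) z = P * (\<Sum>k. c k * ((z/2)^2)^k)" .
    have "lommel_t \<mu> \<nu> z = (\<Sum>k. P * (d k * ((z/2)^2)^k))"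
      unfolding lommel_t_def
    proof (rule suminf_cong)
      fix k
      have "(z/2) powr (\<mu> + 2 * real k + 1) = P * ((z/2)^2)^k"
        using pow_split[of "z/2" "\<mu>+1" k] z by (simp add: P_def add_ac)
      thus "(z / 2) powr (\<mu> + 2 * real k + 1) * rGamma (real k + (\<mu> - \<nu> + 3) / 2) * rGamma (real k + (\<mu> + \<nu> + 3) / 2) = P * (d k * ((z/2)^2)^k)"
        by (simp add: d_def a_def b_def)
    qed
    also have "\<dots> = P * (\<Sum>k. d k * ((z/2)^2)^k)" by (rule suminf_mult[OF sd[OF y]])
    finally have L: "lommel_t \<mu> \<nu> z = P * (\<Sum>k. d k * ((z/2)^2)^k)" .
    show ?thesis unfolding I L using P by simp
  qed
  have yy: "0 < (x/2)^2" "(x/2)^2 < (x'/2)^2" using x by (auto intro: power_strict_mono)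
  have ab: "(real k + a) * (real k + b) - (real k + 1) * (real k + \<mu> + 2) = ((\<mu>+1)^2 - \<nu>^2) / 4" for k
    by (simp add: a_def b_def field_simps power2_eq_square)
  show ?thesis
  proof (intro conjI impI)
    assume h: "\<nu>^2 < (\<mu>+1)^2"
    have "c k / d k < c (Suc k) / d (Suc k)" for k
    proof -
      have "0 < (real k + a) * (real k + b) - (real k + 1) * (real k + \<mu> + 2)"
        unfolding ab using h by simp
      hence q: "(real k + 1) * (real k + \<mu> + 2) < (real k + a) * (real k + b)" by simp
      have "c (Suc k) / d (Suc k) = (c k / d k) * (((real k + a) * (real k + b)) / ((real k + 1) * (real k + \<mu> + 2)))"
        using mu a b dpos[of k] by (simp add: cS dS field_simps)
      moreover have "((real k + a) * (real k + b)) / ((real k + 1) * (real k + \<mu> + 2)) > 1"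
        using q mu by (subst less_divide_eq_1_pos) auto
      moreover have "c k / d k > 0" "d k / c k > 0" using cpos[of k] dpos[of k] by simp_all
      ultimately show ?thesis using mult_strict_left_mono[of 1] by fastforce
    qed
    from ratio_mono2[OF cpos dpos this sc sd yy] show "besselI (\<mu> + 1) x / lommel_t \<mu> \<nu> x < besselI (\<mu> + 1) x' / lommel_t \<mu> \<nu> x'"
      using F x by simp
  next
    assume h: "(\<mu>+1)^2 < \<nu>^2"
    have "d k / c k < d (Suc k) / c (Suc k)" for k
    proof -
      have "(real k + a) * (real k + b) - (real k + 1) * (real k + \<mu> + 2) < 0"
        unfolding ab using h by simp
      hence q: "(real k + a) * (real k + b) < (real k + 1) * (real k + \<mu> + 2)" by simp
      have "d (Suc k) / c (Suc k) = (d k / c k) * (((real k + 1) * (real k + \<mu> + 2)) / ((real k + a) * (real k + b)))"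
        using mu a b cpos[of k] by (simp add: cS dS field_simps)
      moreover have "((real k + 1) * (real k + \<mu> + 2)) / ((real k + a) * (real k + b)) > 1"
        using q a b by (subst less_divide_eq_1_pos) auto
      moreover have "c k / d k > 0" "d k / c k > 0" using cpos[of k] dpos[of k] by simp_all
      ultimately show ?thesis using mult_strict_left_mono[of 1] by fastforce
    qed
    from ratio_mono2[OF dpos cpos this sd sc yy]
    have "(\<Sum>k. d k * ((x/2)^2)^k) / (\<Sum>k. c k * ((x/2)^2)^k) < (\<Sum>k. d k * ((x'/2)^2)^k) / (\<Sum>k. c k * ((x'/2)^2)^k)" .
    moreover have cp: "(\<Sum>k. c k * y^k) > 0" if "y > 0" for y
      using sc[OF that] that cpos by (intro suminf_pos) auto
    moreover have dp: "(\<Sum>k. d k * y^k) > 0" if "y > 0" for y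
      using sd[OF that] that dpos by (intro suminf_pos) auto
    ultimately have "(\<Sum>k. c k * ((x'/2)^2)^k) / (\<Sum>k. d k * ((x'/2)^2)^k) < (\<Sum>k. c k * ((x/2)^2)^k) / (\<Sum>k. d k * ((x/2)^2)^k)"
      by (intro flip_frac[OF cp[OF yy(1)] dp[OF yy(1)] cp[OF order.strict_trans[OF yy]] dp[OF order.strict_trans[OF yy]]])
    thus "besselI (\<mu> + 1) x / lommel_t \<mu> \<nu> x > besselI (\<mu> + 1) x' / lommel_t \<mu> \<nu> x'"
      unfolding F[OF x(1)] F[OF order.strict_trans[OF x]] .
  qed
qed


theorem theorem3p2:
  fixes \<mu> \<nu> :: real
  shows "(\<mu> > -2 \<and> \<bar>\<nu>\<bar> < \<bar>\<mu> + 1\<bar> \<longrightarrow>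
            strict_mono_on {0<..} (\<lambda>x. besselI (\<mu> + 1) x / lommel_t \<mu> \<nu> x))
       \<and> (\<mu> > -2 \<and> \<bar>\<mu> + 1\<bar> < \<bar>\<nu>\<bar> \<and> \<bar>\<nu>\<bar> < \<mu> + 3 \<longrightarrow>
            strict_antimono_on {0<..} (\<lambda>x. besselI (\<mu> + 1) x / lommel_t \<mu> \<nu> x))"
proof (intro conjI impI)
  assume h: "\<mu> > -2 \<and> \<bar>\<nu>\<bar> < \<bar>\<mu> + 1\<bar>"
  have a: "(\<mu> - \<nu> + 3)/2 > 0" and b: "(\<mu> + \<nu> + 3)/2 > 0"
    using h by (auto simp: abs_less_iff split: abs_split)
  have "\<bar>\<nu>\<bar>^2 < \<bar>\<mu> + 1\<bar>^2" using h by (intro power_strict_mono) auto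
  hence sq: "\<nu>^2 < (\<mu>+1)^2" by simp
  show "strict_mono_on {0<..} (\<lambda>x. besselI (\<mu> + 1) x / lommel_t \<mu> \<nu> x)"
    unfolding monotone_on_def
  proof (intro ballI impI)
    fix x x' :: real assume "x \<in> {0<..}" "x' \<in> {0<..}" "x < x'"
    thus "besselI (\<mu> + 1) x / lommel_t \<mu> \<nu> x < besselI (\<mu> + 1) x' / lommel_t \<mu> \<nu> x'"
      using key[OF _ a b, of x x'] h sq by auto
  qed
next
  assume h: "\<mu> > -2 \<and> \<bar>\<mu> + 1\<bar> < \<bar>\<nu>\<bar> \<and> \<bar>\<nu>\<bar> < \<mu> + 3"
  have a: "(\<mu> - \<nu> + 3)/2 > 0" and b: "(\<mu> + \<nu> + 3)/2 > 0"
    using h by (auto simp: abs_less_iff)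
  have "\<bar>\<mu> + 1\<bar>^2 < \<bar>\<nu>\<bar>^2" using h by (intro power_strict_mono) auto
  hence sq: "(\<mu>+1)^2 < \<nu>^2" by simp
  show "strict_antimono_on {0<..} (\<lambda>x. besselI (\<mu> + 1) x / lommel_t \<mu> \<nu> x)"
    unfolding monotone_on_def
  proof (intro ballI impI)
    fix x x' :: real assume "x \<in> {0<..}" "x' \<in> {0<..}" "x < x'"
    thus "besselI (\<mu> + 1) x' / lommel_t \<mu> \<nu> x' < besselI (\<mu> + 1) x / lommel_t \<mu> \<nu> x"
      using key[OF _ a b, of x x'] h sq by auto
  qed
qed

end
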